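(* For every t-relation $r\subseteq\mathcal{D}$, every initial preference formula $F$, and every sequence $X\in\{\mathsf{T},\mathsf{S}\}^*$, we have $\mathrm{Best}_{\succ_{X\mathsf{S}}}(r)\subseteq \mathrm{Best}_{\succ_{X}}(r)$.
   Context: Fix attribute–taxonomy pairs $A_1{:}T_1,\dots,A_d{:}T_d$ with distinct attribute names, where each taxonomy $T_i=(V_i,\le_{V_i})$ is a poset. A t-tuple over a t-schema $S\subseteq\{A_1{:}T_1,\dots,A_d{:}T_d\}$ maps each $A_i$ in $S$ to a value of $V_i$; $\mathcal{D}$ is the set of all t-tuples over all such t-schemas, and a t-relation is a finite set of t-tuples. A preference relation is a binary relation $\succeq$ on $\mathcal{D}$; its strict part is $t_1\succ t_2$ iff $t_1\succeq t_2$ and not $t_2\succeq t_1$. Preferences are given by a formula $F(x,y)=\bigvee_i P_i(x,y)$, a disjunction of statements; each statement $P_i$ is a disjunction of clauses, each clause a satisfiable conjunction of atoms of the forms $x[A_i]\le_{V_i} v$, $x[A_i]\not\le_{V_i} v$, $y[A_i]\le_{V_i} v$, $y[A_i]\not\le_{V_i} v$; the formula induces $t_1\succeq t_2\iff F(t_1,t_2)$. Operator $\mathsf{T}$ maps a formula to one (obtained by adding statements built from composable clause pairs $C_m^b(x)\wedge C_q^w(y)$, where $C^b$ / $C^w$ are the $x$- / $y$-parts of a clause) inducing the transitive closure over $\mathcal{D}$ of the induced relation. Operator $\mathsf{S}$ (specificity-based refinement): repeat rounds; in a round, for each statement $P_i$ let $\mathrm{Impl}(P_i)$ be the set of statements $P_j$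 such that $P_j(t_2,t_1)\Rightarrow P_i(t_1,t_2)$ for all $t_1,t_2\in\mathcal{D}$ but not conversely; simultaneously replace every $P_i$ with nonempty $\mathrm{Impl}(P_i)$ by $P_i(x,y)\wedge\bigwedge_{P_j\in \mathrm{Impl}(P_i)}\neg P_j(y,x)$; stop when no $\mathrm{Impl}$ set is nonempty. After each operator, contradictory clauses and statements subsumed by others are removed. For $X\in\{\mathsf{T},\mathsf{S}\}^*$, $\succeq_X$ (with strict part $\succ_X$) is the relation induced by applying the operators of $X$ in order to the initial formula $F$ ($\succeq_\varepsilon=\succeq$). The Best operator is $\mathrm{Best}_\succ(r)=\{t_1\in r\mid \nexists t_2\in r,\ t_2\succ t_1\}$. *)

theory Defs
  imports Main "HOL-Library.While_Combinator"
begin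

text \<open>Attributes have type 'a (the finite set Ats of attribute names A_1..A_d);
  values have type 'v; V A is the value set of the taxonomy of attribute A and
  le A its partial order.\<close>

definition taxonomies :: "'a set \<Rightarrow> ('a \<Rightarrow> 'v set) \<Rightarrow> ('a \<Rightarrow> 'v \<Rightarrow> 'v \<Rightarrow> bool) \<Rightarrow> bool" where
  "taxonomies Ats V le \<longleftrightarrow> finite Ats \<and>
     (\<forall>A\<in>Ats. (\<forall>v\<in>V A. le A v v)
       \<and> (\<forall>u\<in>V A. \<forall>v\<in>V A. le A u v \<and> le A v u \<longrightarrow> u = v)
       \<and> (\<forall>u\<in>V A. \<forall>v\<in>V A. \<forall>w\<in>V A. le A u v \<and> le A v w \<longrightarrow> le A u w))"

text \<open>A t-tuple is a partial map from attributes to values; its domain is its t-schema.\<close>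
type_synonym ('a,'v) ttuple = "'a \<rightharpoonup> 'v"

definition Dom :: "'a set \<Rightarrow> ('a \<Rightarrow> 'v set) \<Rightarrow> ('a,'v) ttuple set" where
  "Dom Ats V = {t. dom t \<subseteq> Ats \<and> (\<forall>A \<in> dom t. the (t A) \<in> V A)}"

datatype ('a,'v) atom = XLe 'a 'v | XNle 'a 'v | YLe 'a 'v | YNle 'a 'v

type_synonym ('a,'v) clause = "('a,'v) atom list"      \<comment> \<open>conjunction\<close>
type_synonym ('a,'v) stmt = "('a,'v) clause list"      \<comment> \<open>disjunction of clauses\<close>
type_synonym ('a,'v) formula = "('a,'v) stmt list"     \<comment> \<open>disjunction of statements\<close>

definition val_le :: "('a \<Rightarrow> 'v \<Rightarrow> 'v \<Rightarrow> bool) \<Rightarrow> ('a,'v) ttuple \<Rightarrow> 'a \<Rightarrow> 'v \<Rightarrow> bool" where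
  "val_le le t A v \<longleftrightarrow> (case t A of None \<Rightarrow> False | Some u \<Rightarrow> le A u v)"

fun atom_sem :: "('a \<Rightarrow> 'v \<Rightarrow> 'v \<Rightarrow> bool) \<Rightarrow> ('a,'v) atom \<Rightarrow> ('a,'v) ttuple \<Rightarrow> ('a,'v) ttuple \<Rightarrow> bool" where
  "atom_sem le (XLe A v) x y = val_le le x A v"
| "atom_sem le (XNle A v) x y = (\<not> val_le le x A v)"
| "atom_sem le (YLe A v) x y = val_le le y A v"
| "atom_sem le (YNle A v) x y = (\<not> val_le le y A v)"

definition clause_sem where
  "clause_sem le C x y \<longleftrightarrow> (\<forall>a\<in>set C. atom_sem le a x y)"

definition stmt_sem where
  "stmt_sem le P x y \<longleftrightarrow> (\<exists>C\<in>set P. clause_sem le C x y)"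

definition formula_sem where
  "formula_sem le F x y \<longleftrightarrow> (\<exists>P\<in>set F. stmt_sem le P x y)"

definition pref :: "'a set \<Rightarrow> ('a \<Rightarrow> 'v set) \<Rightarrow> ('a \<Rightarrow> 'v \<Rightarrow> 'v \<Rightarrow> bool) \<Rightarrow> ('a,'v) formula
    \<Rightarrow> ('a,'v) ttuple \<Rightarrow> ('a,'v) ttuple \<Rightarrow> bool" where
  "pref Ats V le F t1 t2 \<longleftrightarrow> t1 \<in> Dom Ats V \<and> t2 \<in> Dom Ats V \<and> formula_sem le F t1 t2"

definition strict :: "('b \<Rightarrow> 'b \<Rightarrow> bool) \<Rightarrow> 'b \<Rightarrow> 'b \<Rightarrow> bool" where
  "strict R t1 t2 \<longleftrightarrow> R t1 t2 \<and> \<not> R t2 t1"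

definition Best :: "('b \<Rightarrow> 'b \<Rightarrow> bool) \<Rightarrow> 'b set \<Rightarrow> 'b set" where
  "Best S r = {t1 \<in> r. \<not> (\<exists>t2\<in>r. S t2 t1)}"

fun atom_attr where
  "atom_attr (XLe A v) = A" | "atom_attr (XNle A v) = A" | "atom_attr (YLe A v) = A" | "atom_attr (YNle A v) = A"
fun atom_val where
  "atom_val (XLe A v) = v" | "atom_val (XNle A v) = v" | "atom_val (YLe A v) = v" | "atom_val (YNle A v) = v"

definition clause_sat where
  "clause_sat Ats V le C \<longleftrightarrow> (\<exists>t1\<in>Dom Ats V. \<exists>t2\<in>Dom Ats V. clause_sem le C t1 t2)"

definition wf_formula where
  "wf_formula Ats V le F \<longleftrightarrow> (\<forall>P\<in>set F. \<forall>C\<in>set P. clause_sat Ats V le C \<and>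
      (\<forall>a\<in>set C. atom_attr a \<in> Ats \<and> atom_val a \<in> V (atom_attr a)))"

definition stmt_imp where
  "stmt_imp Ats V le P Q \<longleftrightarrow>
     (\<forall>t1\<in>Dom Ats V. \<forall>t2\<in>Dom Ats V. stmt_sem le P t1 t2 \<longrightarrow> stmt_sem le Q t1 t2)"

definition remove_contr where
  "remove_contr Ats V le F = map (filter (clause_sat Ats V le)) F"

text \<open>Statement i is subsumed if it implies another statement j which it is not
  equivalent to; among equivalent statements only the first one is kept.\<close>
definition subsumed where
  "subsumed Ats V le G i \<longleftrightarrow> (\<exists>j<length G. j \<noteq> i \<and> stmt_imp Ats V le (G!i) (G!j) \<and>
      (\<not> stmt_imp Ats V le (G!j) (G!i) \<or> j < i))"

definition remove_subsumed where
  "remove_subsumed Ats V le G = [G!i. i \<leftarrow> [0..<length G], \<not> subsumed Ats V le G i]"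

definition cleanup where
  "cleanup Ats V le F = remove_subsumed Ats V le (remove_contr Ats V le F)"

fun is_xatom where
  "is_xatom (XLe A v) = True" | "is_xatom (XNle A v) = True" | "is_xatom (YLe A v) = False" | "is_xatom (YNle A v) = False"

definition bpart :: "('a,'v) clause \<Rightarrow> ('a,'v) clause" where "bpart C = filter is_xatom C"
definition wpart :: "('a,'v) clause \<Rightarrow> ('a,'v) clause" where "wpart C = filter (\<lambda>a. \<not> is_xatom a) C"

definition composable where
  "composable Ats V le C1 C2 \<longleftrightarrow>
     (\<exists>t\<in>Dom Ats V. (\<exists>z. clause_sem le (wpart C1) z t) \<and> (\<exists>z. clause_sem le (bpart C2) t z))"

definition all_clauses :: "('a,'v) formula \<Rightarrow> ('a,'v) clause list" where
  "all_clauses F = concat F"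

definition opT where
  "opT Ats V le F = cleanup Ats V le
     (F @ [[bpart Cm @ wpart Cq]. Cm \<leftarrow> all_clauses F, Cq \<leftarrow> all_clauses F,
            (Cm, Cq) \<in> {(C1, C2). C1 \<in> set (all_clauses F) \<and> C2 \<in> set (all_clauses F)
                                  \<and> composable Ats V le C1 C2}\<^sup>+])"

fun neg_atom where
  "neg_atom (XLe A v) = XNle A v" | "neg_atom (XNle A v) = XLe A v"
| "neg_atom (YLe A v) = YNle A v" | "neg_atom (YNle A v) = YLe A v"

fun swap_atom where
  "swap_atom (XLe A v) = YLe A v" | "swap_atom (XNle A v) = YNle A v"
| "swap_atom (YLe A v) = XLe A v" | "swap_atom (YNle A v) = XNle A v"

definition conj_stmt :: "('a,'v) stmt \<Rightarrow> ('a,'v) stmt \<Rightarrow> ('a,'v) stmt" where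
  "conj_stmt P Q = [C @ D. C \<leftarrow> P, D \<leftarrow> Q]"

text \<open>The statement \<not> P(y,x), in disjunctive normal form.\<close>
definition neg_swap_stmt :: "('a,'v) stmt \<Rightarrow> ('a,'v) stmt" where
  "neg_swap_stmt P = foldr (\<lambda>C acc. conj_stmt (map (\<lambda>a. [neg_atom (swap_atom a)]) C) acc) P [[]]"

definition rev_imp where
  "rev_imp Ats V le Pj Pi \<longleftrightarrow>
     (\<forall>t1\<in>Dom Ats V. \<forall>t2\<in>Dom Ats V. stmt_sem le Pj t2 t1 \<longrightarrow> stmt_sem le Pi t1 t2)"

definition Impl :: "'a set \<Rightarrow> ('a \<Rightarrow> 'v set) \<Rightarrow> ('a \<Rightarrow> 'v \<Rightarrow> 'v \<Rightarrow> bool) \<Rightarrow> ('a,'v) formula \<Rightarrow> nat \<Rightarrow> nat set" where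
  "Impl Ats V le G i = {j. j < length G \<and> rev_imp Ats V le (G!j) (G!i) \<and> \<not> rev_imp Ats V le (G!i) (G!j)}"

definition S_round where
  "S_round Ats V le G = map (\<lambda>i. if Impl Ats V le G i = {} then G!i
       else foldl conj_stmt (G!i) (map (\<lambda>j. neg_swap_stmt (G!j)) (sorted_list_of_set (Impl Ats V le G i))))
     [0..<length G]"

text \<open>Rounds are repeated until no Impl set is nonempty.  Should the iteration not
  terminate, the formula is left unchanged.\<close>
definition opS where
  "opS Ats V le F = cleanup Ats V le
     (case while_option (\<lambda>G. \<exists>i<length G. Impl Ats V le G i \<noteq> {}) (S_round Ats V le) F of
        Some G \<Rightarrow> G | None \<Rightarrow> F)"

datatype op = OpT | OpS

fun apply_op where
  "apply_op Ats V le OpT F = opT Ats V le F"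
| "apply_op Ats V le OpS F = opS Ats V le F"

definition apply_ops :: "'a set \<Rightarrow> ('a \<Rightarrow> 'v set) \<Rightarrow> ('a \<Rightarrow> 'v \<Rightarrow> 'v \<Rightarrow> bool) \<Rightarrow> op list \<Rightarrow> ('a,'v) formula \<Rightarrow> ('a,'v) formula" where
  "apply_ops Ats V le X F = fold (apply_op Ats V le) X F"

definition prefX where
  "prefX Ats V le F X = pref Ats V le (apply_ops Ats V le X F)"

end

theory Submission
  imports Defs
begin

lemma clause_sem_append: "clause_sem le (C @ D) x y \<longleftrightarrow> clause_sem le C x y \<and> clause_sem le D x y"
  by (auto simp: clause_sem_def)

lemma conj_stmt_sem: "stmt_sem le (conj_stmt P Q) x y \<longleftrightarrow> stmt_sem le P x y \<and> stmt_sem le Q x y"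
  by (auto simp: stmt_sem_def conj_stmt_def clause_sem_append)

lemma neg_swap_atom: "atom_sem le (neg_atom (swap_atom a)) x y \<longleftrightarrow> \<not> atom_sem le a y x"
  by (cases a) auto

lemma neg_swap_sem: "stmt_sem le (neg_swap_stmt P) x y \<longleftrightarrow> \<not> stmt_sem le P y x"
proof (induction P)
  case Nil
  then show ?case by (simp add: neg_swap_stmt_def stmt_sem_def clause_sem_def)
next
  case (Cons C P)
  have "neg_swap_stmt (C # P) = conj_stmt (map (\<lambda>a. [neg_atom (swap_atom a)]) C) (neg_swap_stmt P)"
    by (simp add: neg_swap_stmt_def)
  moreover have "stmt_sem le (map (\<lambda>a. [neg_atom (swap_atom a)]) C) x y \<longleftrightarrow> \<not> clause_sem le C y x"
    by (auto simp: stmt_sem_def clause_sem_def neg_swap_atom)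
  moreover have "stmt_sem le (C # P) y x \<longleftrightarrow> clause_sem le C y x \<or> stmt_sem le P y x"
    by (simp add: stmt_sem_def)
  ultimately show ?case using Cons by (simp only: conj_stmt_sem) blast
qed

lemma foldl_conj_sem: "stmt_sem le (foldl conj_stmt P (map f js)) x y \<longleftrightarrow>
   stmt_sem le P x y \<and> (\<forall>j\<in>set js. stmt_sem le (f j) x y)"
  by (induction js arbitrary: P) (auto simp: conj_stmt_sem)

definition Qrel where
  "Qrel Ats V le G G' \<longleftrightarrow>
     (\<forall>x\<in>Dom Ats V. \<forall>y\<in>Dom Ats V. formula_sem le G' x y \<longrightarrow> formula_sem le G x y) \<and>
     (\<forall>x\<in>Dom Ats V. \<forall>y\<in>Dom Ats V. formula_sem le G x y \<and> \<not> formula_sem le G y x \<longrightarrow> formula_sem le G' x y)"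

lemma Qrel_refl: "Qrel Ats V le G G" by (auto simp: Qrel_def)

lemma Qrel_trans: "Qrel Ats V le G G1 \<Longrightarrow> Qrel Ats V le G1 G2 \<Longrightarrow> Qrel Ats V le G G2"
  unfolding Qrel_def by blast

lemma S_round_nth:
  assumes "i < length G"
  shows "stmt_sem le (S_round Ats V le G ! i) x y \<longleftrightarrow>
     stmt_sem le (G!i) x y \<and> (\<forall>j\<in>Impl Ats V le G i. \<not> stmt_sem le (G!j) y x)"
proof -
  have fin: "finite (Impl Ats V le G i)" unfolding Impl_def by simp
  show ?thesis using assms
    by (auto simp: S_round_def foldl_conj_sem neg_swap_sem fin)
qed

lemma length_S_round[simp]: "length (S_round Ats V le G) = length G"
  by (simp add: S_round_def)

lemma formula_sem_nth: "formula_sem le G x y \<longleftrightarrow> (\<exists>i<length G. stmt_sem le (G!i) x y)"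
  unfolding formula_sem_def by (metis in_set_conv_nth)

lemma Qrel_round: "Qrel Ats V le G (S_round Ats V le G)"
  unfolding Qrel_def
proof (intro conjI ballI impI)
  fix x y assume x: "x \<in> Dom Ats V" and y: "y \<in> Dom Ats V"
  {
    assume "formula_sem le (S_round Ats V le G) x y"
    then obtain i where i: "i < length G" "stmt_sem le (S_round Ats V le G ! i) x y"
      by (auto simp: formula_sem_nth)
    then show "formula_sem le G x y"
      by (auto simp: S_round_nth formula_sem_nth)
  }
  {
    assume h: "formula_sem le G x y \<and> \<not> formula_sem le G y x"
    then obtain i where i: "i < length G" "stmt_sem le (G ! i) x y"
      by (auto simp: formula_sem_nth)
    have "\<forall>j\<in>Impl Ats V le G i. \<not> stmt_sem le (G!j) y x"
      using h by (auto simp: Impl_def formula_sem_def)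
    with i have "stmt_sem le (S_round Ats V le G ! i) x y" by (simp add: S_round_nth)
    then show "formula_sem le (S_round Ats V le G) x y"
      using i(1) by (auto simp: formula_sem_nth)
  }
qed

lemma remove_contr_sem:
  assumes "x \<in> Dom Ats V" "y \<in> Dom Ats V"
  shows "formula_sem le (remove_contr Ats V le G) x y \<longleftrightarrow> formula_sem le G x y"
  using assms by (auto simp: formula_sem_def remove_contr_def stmt_sem_def clause_sat_def)

lemma stmt_imp_trans: "stmt_imp Ats V le P Q \<Longrightarrow> stmt_imp Ats V le Q R \<Longrightarrow> stmt_imp Ats V le P R"
  unfolding stmt_imp_def by blast

lemma stmt_imp_refl: "stmt_imp Ats V le P P"
  unfolding stmt_imp_def by blast

lemma exists_unsubsumed:
  assumes "i < length G"
  shows "\<exists>k<length G. \<not> subsumed Ats V le G k \<and> stmt_imp Ats V le (G!i) (G!k)"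
  using assms
proof (induction i rule: measure_induct_rule[of "\<lambda>i. card {k. k < length G \<and> stmt_imp Ats V le (G!i) (G!k)} * length G + i"])
  case (less i)
  let ?U = "\<lambda>i. {k. k < length G \<and> stmt_imp Ats V le (G!i) (G!k)}"
  show ?case
  proof (cases "subsumed Ats V le G i")
    case False
    then show ?thesis using less.prems stmt_imp_refl by blast
  next
    case True
    then obtain j where j: "j < length G" "j \<noteq> i" "stmt_imp Ats V le (G!i) (G!j)"
      "\<not> stmt_imp Ats V le (G!j) (G!i) \<or> j < i"
      unfolding subsumed_def by blast
    have sub: "?U j \<subseteq> ?U i" using j(3) stmt_imp_trans by blast
    have fin: "finite (?U i)" by simp
    have "card (?U j) * length G + j < card (?U i) * length G + i"
    proof (cases "stmt_imp Ats V le (G!j) (G!i)")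
      case True
      then have "?U j = ?U i" using sub stmt_imp_trans by blast
      then show ?thesis using j(4) True by simp
    next
      case False
      then have "i \<notin> ?U j" "i \<in> ?U i" using less.prems stmt_imp_refl by auto
      then have "?U j \<subset> ?U i" using sub by blast
      then have c: "card (?U j) < card (?U i)" using fin psubset_card_mono by blast
      have "card (?U j) * length G + j < (card (?U j) + 1) * length G" using j(1) by simp
      also have "\<dots> \<le> card (?U i) * length G" using c by (intro mult_right_mono) auto
      finally show ?thesis by simp
    qed
    then obtain k where "k<length G" "\<not> subsumed Ats V le G k" "stmt_imp Ats V le (G!j) (G!k)"
      using less.IH j(1) by blast
    then show ?thesis using j(3) stmt_imp_trans by blast
  qed
qed

lemma remove_subsumed_sem:
  assumes "x \<in> Dom Ats V" "y \<in> Dom Ats V"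
  shows "formula_sem le (remove_subsumed Ats V le G) x y \<longleftrightarrow> formula_sem le G x y"
proof
  assume "formula_sem le (remove_subsumed Ats V le G) x y"
  then show "formula_sem le G x y"
    by (auto simp: formula_sem_def remove_subsumed_def)
next
  assume "formula_sem le G x y"
  then obtain i where i: "i < length G" "stmt_sem le (G!i) x y"
    by (auto simp: formula_sem_nth)
  then obtain k where k: "k<length G" "\<not> subsumed Ats V le G k" "stmt_imp Ats V le (G!i) (G!k)"
    using exists_unsubsumed by blast
  then have "stmt_sem le (G!k) x y" using i assms by (auto simp: stmt_imp_def)
  moreover have "G!k \<in> set (remove_subsumed Ats V le G)"
    using k by (force simp: remove_subsumed_def)
  ultimately show "formula_sem le (remove_subsumed Ats V le G) x y"
    by (auto simp: formula_sem_def)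
qed

lemma cleanup_sem:
  assumes "x \<in> Dom Ats V" "y \<in> Dom Ats V"
  shows "formula_sem le (cleanup Ats V le G) x y \<longleftrightarrow> formula_sem le G x y"
  using assms by (simp add: cleanup_def remove_subsumed_sem remove_contr_sem)

lemma Qrel_opS: "Qrel Ats V le G (opS Ats V le G)"
proof -
  let ?W = "case while_option (\<lambda>G. \<exists>i<length G. Impl Ats V le G i \<noteq> {}) (S_round Ats V le) G of
        Some G' \<Rightarrow> G' | None \<Rightarrow> G"
  have "Qrel Ats V le G ?W"
  proof (cases "while_option (\<lambda>G. \<exists>i<length G. Impl Ats V le G i \<noteq> {}) (S_round Ats V le) G")
    case None
    then show ?thesis by (simp add: Qrel_refl)
  next
    case (Some G')
    have "Qrel Ats V le G G'"
      by (rule while_option_rule[where P="Qrel Ats V le G", OF _ Some])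
         (auto intro: Qrel_refl Qrel_trans Qrel_round)
    then show ?thesis using Some by simp
  qed
  moreover have "Qrel Ats V le ?W (opS Ats V le G)"
    by (auto simp: Qrel_def opS_def cleanup_sem)
  ultimately show ?thesis by (rule Qrel_trans)
qed

theorem mainTheorem1:
  fixes Ats :: "'a set" and V :: "'a \<Rightarrow> 'v set" and le :: "'a \<Rightarrow> 'v \<Rightarrow> 'v \<Rightarrow> bool"
    and F :: "('a,'v) formula" and X :: "op list" and r :: "('a,'v) ttuple set"
  assumes "taxonomies Ats V le"
    and "wf_formula Ats V le F"
    and "finite r" and "r \<subseteq> Dom Ats V"
  shows "Best (strict (prefX Ats V le F (X @ [OpS]))) r \<subseteq> Best (strict (prefX Ats V le F X)) r"
proof
  let ?G = "apply_ops Ats V le X F"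
  have eq: "apply_ops Ats V le (X @ [OpS]) F = opS Ats V le ?G"
    by (simp add: apply_ops_def)
  have Q: "Qrel Ats V le ?G (opS Ats V le ?G)" by (rule Qrel_opS)
  fix t1 assume t1: "t1 \<in> Best (strict (prefX Ats V le F (X @ [OpS]))) r"
  show "t1 \<in> Best (strict (prefX Ats V le F X)) r"
  proof (rule ccontr)
    assume "t1 \<notin> Best (strict (prefX Ats V le F X)) r"
    then obtain t2 where t2: "t2 \<in> r" "strict (prefX Ats V le F X) t2 t1"
      using t1 by (auto simp: Best_def)
    have d: "t1 \<in> Dom Ats V" "t2 \<in> Dom Ats V" using t1 t2 assms(4) by (auto simp: Best_def)
    have "strict (prefX Ats V le F (X @ [OpS])) t2 t1"
      using t2(2) d Q unfolding strict_def prefX_def eq pref_def Qrel_def by blast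
    then show False using t1 t2 by (auto simp: Best_def)
  qed
qed

end
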